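(* Let $p\ge 1$ and $m\ge 2$ be integers, and let $\mathbf{x}_1,\dots,\mathbf{x}_p\in\mathbb{R}^2$ be given nodes (neighbours of the origin $\mathbf{x}_0=\mathbf{0}$). Let $\varphi_1,\dots,\varphi_n$ be an enumeration of the set $$\Psi=\{x,\ y,\ x^2,\ xy,\ y^2,\ \dots,\ x^m,\ x^{m-1}y,\ \dots,\ y^m\}$$ of all monomials in $(x,y)$ of total degree between $1$ and $m$ (so $n=\binom{m+2}{2}-1$), ordered by nondecreasing degree. For $r>0$ define the $n\times p$ matrix $\Phi(r)$ by $\Phi(r)_{ik}=\varphi_i(r\mathbf{x}_k)$, set $\Phi=\Phi(1)$, and let $\mathbf{Y}=(\Delta\varphi_1(\mathbf{0}),\dots,\Delta\varphi_n(\mathbf{0}))^{\mathrm T}\in\mathbb{R}^n$. Assume $\Phi$ has full column rank $p$ (so that for every $r>0$ the linear system $\mathbf{Y}=\Phi(r)\boldsymbol{\omega}$ has a unique least-squares solution). Let $\boldsymbol{\omega}_r\in\mathbb{R}^p$ be this least-squares solution, i.e. the unique minimizer of $\|\mathbf{Y}-\Phi(r)\boldsymbol{\omega}\|_2$, and put $\boldsymbol{\eta}_r=r^2\boldsymbol{\omega}_r$. Then: 1) $\boldsymbol{\eta}_r$ is bounded as $r\to 0^+$, i.e. there exist $r_0>0$ and $C>0$ such that $\|\boldsymbol{\eta}_r\|\le C$ for all $r\in(0,r_0]$. 2) If $r_n\to 0^+$ and $\boldsymbol{\eta}=\lim_{n\to\infty}\boldsymbol{\eta}_{r_n}$ exists,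 then $\boldsymbol{\eta}$ is an approximation of the Laplacian $\Delta$ at $\mathbf{0}$ of the largest possible order, i.e. the order of $\boldsymbol{\eta}$ equals $\max_{\boldsymbol{\zeta}\in\mathbb{R}^p}\operatorname{ord}(\boldsymbol{\zeta})$.
   Context: Notation: $\Delta=\partial_x^2+\partial_y^2$ is the Laplacian on $\mathbb{R}^2$; thus $\Delta\varphi(\mathbf 0)=2$ for $\varphi\in\{x^2,y^2\}$ and $\Delta\varphi(\mathbf 0)=0$ for every other monomial in $\Psi$. A weight vector $\boldsymbol{\zeta}=(\zeta_1,\dots,\zeta_p)^{\mathrm T}\in\mathbb{R}^p$ defines the discrete Laplace approximation at $\mathbf 0$, $u\mapsto \sum_{k=1}^p \zeta_k\,[u(\mathbf{x}_k)-u(\mathbf 0)]$ (for the scaled nodes $r\mathbf{x}_k$ one uses $u\mapsto r^{-2}\sum_k\zeta_k[u(r\mathbf{x}_k)-u(\mathbf 0)]$). Order of approximation: $\boldsymbol{\zeta}$ is an approximation of $\Delta$ at $\mathbf 0$ of order $l$ ($0\le l\le m$), written $\operatorname{ord}(\boldsymbol{\zeta})=l$, if $l$ is the largest integer in $\{0,\dots,m\}$ such that $\sum_{k=1}^p\zeta_k\,\varphi(\mathbf{x}_k)=\Delta\varphi(\mathbf 0)$ holds for every monomial $\varphi\in\Psi$ of degree $\le l$ (the condition for $l=0$ is vacuous). Equivalently, by homogeneity $\varphi(r\mathbf{x})=r^{\deg\varphi}\varphi(\mathbf{x})$, the scaled operator $r^{-2}\sum_k\zeta_k[\varphi(r\mathbf{x}_k)-\varphi(\mathbf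 0)]$ reproduces $\Delta\varphi(\mathbf 0)$ exactly for all monomials of degree $\le l$, so that for polynomials $u$ the error $\Delta u(\mathbf 0)-r^{-2}\sum_k\zeta_k[u(r\mathbf{x}_k)-u(\mathbf 0)]$ is $O(r^{l-1})$ as $r\to0$. *)

theory Defs
  imports "HOL-Analysis.Analysis"
begin

text \<open>The monomials of Psi are encoded by their exponent pairs (a,b), standing for x^a y^b,
  with 1 \<le> a+b \<le> m.  Row ordering of Phi is irrelevant for the least-squares problem.\<close>

definition Psi :: "nat \<Rightarrow> (nat \<times> nat) set" where
  "Psi m = {(a, b). 1 \<le> a + b \<and> a + b \<le> m}"

definition mono :: "nat \<times> nat \<Rightarrow> real \<times> real \<Rightarrow> real" where
  "mono e z = fst z ^ fst e * snd z ^ snd e"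

definition mdeg :: "nat \<times> nat \<Rightarrow> nat" where
  "mdeg e = fst e + snd e"

definition lap0 :: "nat \<times> nat \<Rightarrow> real" where
  "lap0 e = (if e = (2, 0) \<or> e = (0, 2) then 2 else 0)"

definition Phi :: "('p::finite \<Rightarrow> real \<times> real) \<Rightarrow> real \<Rightarrow> nat \<times> nat \<Rightarrow> 'p \<Rightarrow> real" where
  "Phi x r e k = mono e (r *\<^sub>R x k)"

definition full_col_rank :: "nat \<Rightarrow> ('p::finite \<Rightarrow> real \<times> real) \<Rightarrow> bool" where
  "full_col_rank m x \<longleftrightarrow>
     (\<forall>w :: real ^ 'p. (\<forall>e \<in> Psi m. (\<Sum>k\<in>UNIV. Phi x 1 e k * w $ k) = 0) \<longrightarrow> w = 0)"

definition resid :: "nat \<Rightarrow> ('p::finite \<Rightarrow> real \<times> real) \<Rightarrow> real \<Rightarrow> real ^ 'p \<Rightarrow> real" where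
  "resid m x r w = (\<Sum>e \<in> Psi m. (lap0 e - (\<Sum>k\<in>UNIV. Phi x r e k * w $ k))\<^sup>2)"

definition reproduces :: "nat \<Rightarrow> ('p::finite \<Rightarrow> real \<times> real) \<Rightarrow> nat \<Rightarrow> real ^ 'p \<Rightarrow> bool" where
  "reproduces m x l z \<longleftrightarrow>
     (\<forall>e \<in> Psi m. mdeg e \<le> l \<longrightarrow> (\<Sum>k\<in>UNIV. z $ k * mono e (x k)) = lap0 e)"

definition ord_approx :: "nat \<Rightarrow> ('p::finite \<Rightarrow> real \<times> real) \<Rightarrow> real ^ 'p \<Rightarrow> nat" where
  "ord_approx m x z = (GREATEST l. l \<le> m \<and> reproduces m x l z)"

end

theory Submission imports Defs begin

definition FF :: "'e set \<Rightarrow> ('e \<Rightarrow> nat) \<Rightarrow> ('e \<Rightarrow> 'v::real_inner) \<Rightarrow> real \<Rightarrow> ('e \<Rightarrow> real) \<Rightarrow> 'v \<Rightarrow> real"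
  where "FF E lev a \<epsilon> y \<eta> = (\<Sum>e\<in>E. \<epsilon> ^ lev e * (y e - a e \<bullet> \<eta>)\<^sup>2)"

lemma FF_nonneg: "0 \<le> \<epsilon> \<Longrightarrow> 0 \<le> FF E lev a \<epsilon> y \<eta>"
  unfolding FF_def by (intro sum_nonneg) auto

lemma coercive:
  fixes a :: "'e \<Rightarrow> 'v::euclidean_space"
  assumes fin: "finite E0" and sT: "subspace T" and inj: "\<forall>z\<in>T. (\<forall>e\<in>E0. a e \<bullet> z = 0) \<longrightarrow> z = 0"
  shows "\<exists>c\<ge>0. \<forall>z\<in>T. (norm z)\<^sup>2 \<le> c * (\<Sum>e\<in>E0. (a e \<bullet> z)\<^sup>2)"
proof -
  define f where "f = (\<lambda>z. \<Sum>e\<in>E0. (a e \<bullet> z) *\<^sub>R a e)"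
  have lin: "linear f"
    unfolding f_def by (intro linearI) (auto simp: inner_add_right scaleR_add_left sum.distrib scaleR_sum_right)
  then have bl: "bounded_linear f" using linear_conv_bounded_linear by blast
  have fz: "z \<bullet> f z = (\<Sum>e\<in>E0. (a e \<bullet> z)\<^sup>2)" for z
    unfolding f_def by (simp add: inner_sum_right power2_eq_square inner_commute)
  have injf: "\<forall>z\<in>T. f z = 0 \<longrightarrow> z = 0"
  proof (intro ballI impI)
    fix z assume "z \<in> T" "f z = 0"
    then have "(\<Sum>e\<in>E0. (a e \<bullet> z)\<^sup>2) = 0" using fz[of z] by simp
    then have "\<forall>e\<in>E0. (a e \<bullet> z)\<^sup>2 = 0" using sum_nonneg_eq_0_iff[OF fin, of "\<lambda>e. (a e \<bullet> z)\<^sup>2"] by simp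
    then show "z = 0" using inj \<open>z \<in> T\<close> by auto
  qed
  obtain \<mu> where mu: "\<mu> > 0" "\<forall>z\<in>T. norm (f z) \<ge> \<mu> * norm z"
    using injective_imp_isometric[OF closed_subspace[OF sT] sT bl injf] by blast
  define Aa where "Aa = (\<Sum>e\<in>E0. (norm (a e))\<^sup>2)"
  have fq: "(norm (f z))\<^sup>2 \<le> Aa * (\<Sum>e\<in>E0. (a e \<bullet> z)\<^sup>2)" for z
  proof -
    have "norm (f z) \<le> (\<Sum>e\<in>E0. \<bar>a e \<bullet> z\<bar> * norm (a e))"
      unfolding f_def by (rule order_trans[OF norm_sum]) simp
    moreover have "0 \<le> norm (f z)" by simp
    ultimately have "(norm (f z))\<^sup>2 \<le> (\<Sum>e\<in>E0. \<bar>a e \<bullet> z\<bar> * norm (a e))\<^sup>2"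
      by (simp add: power_mono)
    also have "\<dots> \<le> (\<Sum>e\<in>E0. (\<bar>a e \<bullet> z\<bar>)\<^sup>2) * (\<Sum>e\<in>E0. (norm (a e))\<^sup>2)"
      by (rule Cauchy_Schwarz_ineq_sum)
    finally show ?thesis by (simp add: Aa_def mult.commute)
  qed
  show ?thesis
  proof (intro exI[of _ "Aa / \<mu>\<^sup>2"] conjI ballI)
    show "0 \<le> Aa / \<mu>\<^sup>2" unfolding Aa_def by (intro divide_nonneg_nonneg sum_nonneg) auto
    fix z assume "z \<in> T"
    then have "\<mu> * norm z \<le> norm (f z)" using mu by auto
    then have "(\<mu> * norm z)\<^sup>2 \<le> (norm (f z))\<^sup>2" using mu by (intro power_mono) auto
    then have "\<mu>\<^sup>2 * (norm z)\<^sup>2 \<le> Aa * (\<Sum>e\<in>E0. (a e \<bullet> z)\<^sup>2)" using fq[of z] by (simp add: power_mult_distrib)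
    then show "(norm z)\<^sup>2 \<le> Aa / \<mu>\<^sup>2 * (\<Sum>e\<in>E0. (a e \<bullet> z)\<^sup>2)"
      using mu by (simp add: field_simps)
  qed
qed


lemma sq1: "(z::real)\<^sup>2 \<le> 2*y\<^sup>2 + 2*(y - z)\<^sup>2"
proof -
  have "0 \<le> (2*y - z)\<^sup>2" by simp
  then show ?thesis by (simp add: power2_eq_square algebra_simps)
qed

lemma sq2: "((y::real) - z)\<^sup>2 \<le> 2*y\<^sup>2 + 2*z\<^sup>2"
proof -
  have "0 \<le> (y + z)\<^sup>2" by simp
  then show ?thesis by (simp add: power2_eq_square algebra_simps)
qed

lemma key:
  fixes a :: "'e \<Rightarrow> 'v::euclidean_space"
  shows "finite E \<Longrightarrow> subspace S \<Longrightarrow> (\<forall>e\<in>E. lev e < N) \<Longrightarrow> (\<forall>\<eta>\<in>S. (\<forall>e\<in>E. a e \<bullet> \<eta> = 0) \<longrightarrow> \<eta> = 0) \<Longrightarrow>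
    \<exists>C. \<forall>\<epsilon> y \<eta>. 0 < \<epsilon> \<longrightarrow> \<epsilon> \<le> 1 \<longrightarrow> \<eta> \<in> S \<longrightarrow> (\<forall>\<eta>'\<in>S. FF E lev a \<epsilon> y \<eta> \<le> FF E lev a \<epsilon> y \<eta>')
       \<longrightarrow> (norm \<eta>)\<^sup>2 \<le> C * (\<Sum>e\<in>E. (y e)\<^sup>2)"
proof (induction N arbitrary: E lev S)
  case 0
  then have "E = {}" by auto
  then have "\<forall>\<eta>\<in>S. \<eta> = 0" using 0 by auto
  then show ?case by (intro exI[of _ 0]) auto
next
  case (Suc N)
  define E0 where "E0 = {e\<in>E. lev e = 0}"
  define E1 where "E1 = {e\<in>E. lev e \<noteq> 0}"
  define lev1 where "lev1 = (\<lambda>e. lev e - 1)"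
  define K where "K = {\<eta>\<in>S. \<forall>e\<in>E0. a e \<bullet> \<eta> = 0}"
  have finE: "finite E" using Suc.prems(1) .
  have fin0: "finite E0" "finite E1" using finE by (auto simp: E0_def E1_def)
  have sS: "subspace S" using Suc.prems(2) .
  have sK: "subspace K" using sS unfolding K_def subspace_def by (auto simp: inner_add_right)
  have "\<exists>C. \<forall>\<epsilon> y \<eta>. 0 < \<epsilon> \<longrightarrow> \<epsilon> \<le> 1 \<longrightarrow> \<eta> \<in> K \<longrightarrow> (\<forall>\<eta>'\<in>K. FF E1 lev1 a \<epsilon> y \<eta> \<le> FF E1 lev1 a \<epsilon> y \<eta>')
       \<longrightarrow> (norm \<eta>)\<^sup>2 \<le> C * (\<Sum>e\<in>E1. (y e)\<^sup>2)"
  proof (rule Suc.IH[OF fin0(2) sK])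
    show "\<forall>e\<in>E1. lev1 e < N" using Suc.prems(3) by (auto simp: E1_def lev1_def)
    show "\<forall>\<eta>\<in>K. (\<forall>e\<in>E1. a e \<bullet> \<eta> = 0) \<longrightarrow> \<eta> = 0"
      using Suc.prems(4) by (auto simp: K_def E0_def E1_def) (metis neq0_conv)
  qed
  then obtain C1 where C1: "\<And>\<epsilon> y \<eta>. 0 < \<epsilon> \<Longrightarrow> \<epsilon> \<le> 1 \<Longrightarrow> \<eta> \<in> K \<Longrightarrow> (\<forall>\<eta>'\<in>K. FF E1 lev1 a \<epsilon> y \<eta> \<le> FF E1 lev1 a \<epsilon> y \<eta>')
       \<Longrightarrow> (norm \<eta>)\<^sup>2 \<le> C1 * (\<Sum>e\<in>E1. (y e)\<^sup>2)" by blast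
  define T where "T = {z\<in>S. \<forall>w\<in>K. z \<bullet> w = 0}"
  have sT: "subspace T" using sS unfolding T_def subspace_def by (auto simp: inner_add_left)
  have injT: "\<forall>z\<in>T. (\<forall>e\<in>E0. a e \<bullet> z = 0) \<longrightarrow> z = 0"
  proof (intro ballI impI)
    fix z assume z: "z \<in> T" "\<forall>e\<in>E0. a e \<bullet> z = 0"
    then have "z \<in> K" by (auto simp: K_def T_def)
    then have "z \<bullet> z = 0" using z by (auto simp: T_def)
    then show "z = 0" by simp
  qed
  obtain c where c: "c \<ge> 0" "\<And>z. z \<in> T \<Longrightarrow> (norm z)\<^sup>2 \<le> c * (\<Sum>e\<in>E0. (a e \<bullet> z)\<^sup>2)"
    using coercive[OF fin0(1) sT injT] by blast
  define Aa where "Aa = (\<Sum>e\<in>E. (norm (a e))\<^sup>2)"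
  have Aa0: "Aa \<ge> 0" unfolding Aa_def by (intro sum_nonneg) auto
  define C where "C = 4 * c + max C1 0 * (2 + 2 * Aa * (4 * c))"
  show ?case
  proof (intro exI[of _ C] allI impI)
    fix \<epsilon> :: real and y \<eta>
    assume eps: "0 < \<epsilon>" "\<epsilon> \<le> 1" and eS: "\<eta> \<in> S" and mn: "\<forall>\<eta>'\<in>S. FF E lev a \<epsilon> y \<eta> \<le> FF E lev a \<epsilon> y \<eta>'"
    define Q where "Q = (\<Sum>e\<in>E. (y e)\<^sup>2)"
    have Q0: "Q \<ge> 0" unfolding Q_def by (intro sum_nonneg) auto
    obtain k t where kK: "k \<in> span K" and orth: "\<And>w. w \<in> span K \<Longrightarrow> orthogonal t w" and eq: "\<eta> = k + t"
      using orthogonal_subspace_decomp_exists[of K \<eta>] by blast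
    have kK': "k \<in> K" using kK sK by (metis span_eq_iff)
    have kS: "k \<in> S" using kK' by (simp add: K_def)
    have tS: "t \<in> S" using subspace_diff[OF sS eS kS] eq by simp
    have tT: "t \<in> T" using tS orth by (auto simp: T_def orthogonal_def span_base)
    define y' where "y' = (\<lambda>e. y e - a e \<bullet> t)"
    have split: "FF E lev a \<epsilon> y (t + k') = (\<Sum>e\<in>E0. (y e - a e \<bullet> t)\<^sup>2) + \<epsilon> * FF E1 lev1 a \<epsilon> y' k'"
      if "k' \<in> K" for k'
    proof -
      have E: "E = E0 \<union> E1" "E0 \<inter> E1 = {}" by (auto simp: E0_def E1_def)
      have "FF E lev a \<epsilon> y (t + k') = (\<Sum>e\<in>E0. \<epsilon> ^ lev e * (y e - a e \<bullet> (t + k'))\<^sup>2) + (\<Sum>e\<in>E1. \<epsilon> ^ lev e * (y e - a e \<bullet> (t + k'))\<^sup>2)"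
        unfolding FF_def using E fin0 by (simp add: sum.union_disjoint)
      also have "(\<Sum>e\<in>E0. \<epsilon> ^ lev e * (y e - a e \<bullet> (t + k'))\<^sup>2) = (\<Sum>e\<in>E0. (y e - a e \<bullet> t)\<^sup>2)"
        using that by (intro sum.cong) (auto simp: E0_def K_def inner_add_right)
      also have "(\<Sum>e\<in>E1. \<epsilon> ^ lev e * (y e - a e \<bullet> (t + k'))\<^sup>2) = \<epsilon> * FF E1 lev1 a \<epsilon> y' k'"
        unfolding FF_def sum_distrib_left
      proof (intro sum.cong refl)
        fix e assume "e \<in> E1"
        then have "lev e = Suc (lev1 e)" by (auto simp: E1_def lev1_def)
        then show "\<epsilon> ^ lev e * (y e - a e \<bullet> (t + k'))\<^sup>2 = \<epsilon> * (\<epsilon> ^ lev1 e * (y' e - a e \<bullet> k')\<^sup>2)"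
          by (simp add: y'_def inner_add_right algebra_simps)
      qed
      finally show ?thesis .
    qed
    have kmin: "\<forall>k'\<in>K. FF E1 lev1 a \<epsilon> y' k \<le> FF E1 lev1 a \<epsilon> y' k'"
    proof
      fix k' assume k': "k' \<in> K"
      have "t + k' \<in> S" using tS k' sS by (auto simp: K_def intro: subspace_add)
      then have "FF E lev a \<epsilon> y (t + k) \<le> FF E lev a \<epsilon> y (t + k')" using mn eq by (simp add: add.commute)
      then have "\<epsilon> * FF E1 lev1 a \<epsilon> y' k \<le> \<epsilon> * FF E1 lev1 a \<epsilon> y' k'" using split[OF kK'] split[OF k'] by simp
      then show "FF E1 lev1 a \<epsilon> y' k \<le> FF E1 lev1 a \<epsilon> y' k'" using eps by simp
    qed
    have k_bound: "(norm k)\<^sup>2 \<le> C1 * (\<Sum>e\<in>E1. (y' e)\<^sup>2)" using C1[OF eps kK' kmin] .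
    have "FF E lev a \<epsilon> y \<eta> \<le> FF E lev a \<epsilon> y 0" using mn sS by (simp add: subspace_0)
    also have "\<dots> \<le> Q" unfolding FF_def Q_def
      by (intro sum_mono) (simp add: eps power_le_one less_imp_le mult_left_le_one_le)
    finally have FQ: "FF E lev a \<epsilon> y \<eta> \<le> Q" .
    have "(\<Sum>e\<in>E0. (y e - a e \<bullet> t)\<^sup>2) \<le> FF E lev a \<epsilon> y \<eta>"
      using split[OF kK'] eq FF_nonneg[of \<epsilon> E1 lev1 a y' k] eps by (simp add: add.commute)
    with FQ have r0: "(\<Sum>e\<in>E0. (y e - a e \<bullet> t)\<^sup>2) \<le> Q" by simp
    have Q0le: "(\<Sum>e\<in>E0. (y e)\<^sup>2) \<le> Q" unfolding Q_def
      by (intro sum_mono2 finE) (auto simp: E0_def)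
    have "(\<Sum>e\<in>E0. (a e \<bullet> t)\<^sup>2) \<le> (\<Sum>e\<in>E0. 2 * (y e)\<^sup>2 + 2 * (y e - a e \<bullet> t)\<^sup>2)"
      by (intro sum_mono) (rule sq1)
    also have "\<dots> = 2 * (\<Sum>e\<in>E0. (y e)\<^sup>2) + 2 * (\<Sum>e\<in>E0. (y e - a e \<bullet> t)\<^sup>2)"
      by (simp add: sum.distrib sum_distrib_left)
    also have "\<dots> \<le> 4 * Q" using r0 Q0le by simp
    finally have qt: "(\<Sum>e\<in>E0. (a e \<bullet> t)\<^sup>2) \<le> 4 * Q" .
    have t_bound: "(norm t)\<^sup>2 \<le> 4 * c * Q"
    proof -
      have "c * (\<Sum>e\<in>E0. (a e \<bullet> t)\<^sup>2) \<le> c * (4 * Q)" by (rule mult_left_mono[OF qt c(1)])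
      then show ?thesis using c(2)[OF tT] by simp
    qed
    have "(\<Sum>e\<in>E1. (y' e)\<^sup>2) \<le> (\<Sum>e\<in>E1. 2 * (y e)\<^sup>2 + 2 * ((norm (a e))\<^sup>2 * (norm t)\<^sup>2))"
    proof (intro sum_mono)
      fix e
      have cs: "(a e \<bullet> t)\<^sup>2 \<le> (norm (a e))\<^sup>2 * (norm t)\<^sup>2"
      proof -
        have "\<bar>a e \<bullet> t\<bar> \<le> norm (a e) * norm t" by (rule Cauchy_Schwarz_ineq2)
        then have "\<bar>a e \<bullet> t\<bar>\<^sup>2 \<le> (norm (a e) * norm t)\<^sup>2" by (intro power_mono) auto
        then show ?thesis by (simp add: power_mult_distrib)
      qed
      have "(y' e)\<^sup>2 \<le> 2 * (y e)\<^sup>2 + 2 * (a e \<bullet> t)\<^sup>2"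
        unfolding y'_def by (rule sq2)
      then show "(y' e)\<^sup>2 \<le> 2 * (y e)\<^sup>2 + 2 * ((norm (a e))\<^sup>2 * (norm t)\<^sup>2)" using cs by simp
    qed
    also have "\<dots> = 2 * (\<Sum>e\<in>E1. (y e)\<^sup>2) + 2 * (\<Sum>e\<in>E1. (norm (a e))\<^sup>2) * (norm t)\<^sup>2"
      by (simp add: sum.distrib sum_distrib_left sum_distrib_right mult.assoc)
    also have "\<dots> \<le> 2 * Q + 2 * Aa * (4 * c * Q)"
    proof -
      have "(\<Sum>e\<in>E1. (y e)\<^sup>2) \<le> Q" unfolding Q_def by (intro sum_mono2 finE) (auto simp: E1_def)
      moreover have "(\<Sum>e\<in>E1. (norm (a e))\<^sup>2) \<le> Aa" unfolding Aa_def by (intro sum_mono2 finE) (auto simp: E1_def)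
      moreover have "0 \<le> (\<Sum>e\<in>E1. (norm (a e))\<^sup>2)" by (intro sum_nonneg) auto
      ultimately have "(\<Sum>e\<in>E1. (norm (a e))\<^sup>2) * (norm t)\<^sup>2 \<le> Aa * (4 * c * Q)"
        using t_bound Aa0 by (intro mult_mono) auto
      with \<open>(\<Sum>e\<in>E1. (y e)\<^sup>2) \<le> Q\<close> show ?thesis by linarith
    qed
    finally have y'b: "(\<Sum>e\<in>E1. (y' e)\<^sup>2) \<le> (2 + 2 * Aa * (4 * c)) * Q" by (simp add: algebra_simps)
    have y'0: "0 \<le> (\<Sum>e\<in>E1. (y' e)\<^sup>2)" by (intro sum_nonneg) auto
    have "(norm k)\<^sup>2 \<le> max C1 0 * (\<Sum>e\<in>E1. (y' e)\<^sup>2)"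
      using k_bound mult_right_mono[OF max.cobounded1 y'0, of C1 0] by linarith
    also have "\<dots> \<le> max C1 0 * ((2 + 2 * Aa * (4 * c)) * Q)" using y'b by (intro mult_left_mono) auto
    finally have kb: "(norm k)\<^sup>2 \<le> max C1 0 * (2 + 2 * Aa * (4 * c)) * Q" by (simp add: mult.assoc)
    have "(norm \<eta>)\<^sup>2 = (norm t)\<^sup>2 + (norm k)\<^sup>2"
      using norm_add_Pythagorean[of t k] orth[OF kK] eq by (simp add: add.commute)
    also have "\<dots> \<le> 4 * c * Q + max C1 0 * (2 + 2 * Aa * (4 * c)) * Q"
      using t_bound kb by linarith
    also have "\<dots> = C * Q" unfolding C_def by (simp add: algebra_simps)
    finally show "(norm \<eta>)\<^sup>2 \<le> C * (\<Sum>e\<in>E. (y e)\<^sup>2)" unfolding Q_def .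
  qed
qed


definition aa :: "('p::finite \<Rightarrow> real \<times> real) \<Rightarrow> nat \<times> nat \<Rightarrow> real^'p" where
  "aa x e = (\<chi> k. mono e (x k))"

lemma aa_inner: "aa x e \<bullet> w = (\<Sum>k\<in>UNIV. mono e (x k) * w $ k)"
  by (simp add: aa_def inner_vec_def)

lemma finite_Psi: "finite (Psi m)"
proof (rule finite_subset)
  show "Psi m \<subseteq> {0..m} \<times> {0..m}" by (auto simp: Psi_def)
qed auto

lemma mdeg_Psi: "e \<in> Psi m \<Longrightarrow> 1 \<le> mdeg e \<and> mdeg e \<le> m"
  by (auto simp: Psi_def mdeg_def)

lemma lap0_nz: "lap0 e \<noteq> 0 \<Longrightarrow> mdeg e = 2"
  by (auto simp: lap0_def mdeg_def split: if_splits)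

lemma mono_scale: "mono e (r *\<^sub>R z) = r ^ mdeg e * mono e z"
  by (cases z) (simp add: mono_def mdeg_def power_mult_distrib power_add)

lemma term_eq:
  fixes r L s :: real
  assumes "1 \<le> d" "L \<noteq> 0 \<Longrightarrow> d = 2"
  shows "r\<^sup>2 * (L - r^d * s)\<^sup>2 = (r\<^sup>2)^(d-1) * (L - r\<^sup>2 * s)\<^sup>2"
proof (cases "d = 2")
  case True then show ?thesis by simp
next
  case False
  then have L: "L = 0" using assms(2) by blast
  obtain j where d: "d = Suc j" using assms(1) by (cases d) auto
  show ?thesis unfolding L d
    by (simp add: power_mult_distrib power_mult[symmetric] power_add[symmetric] algebra_simps)
qed

lemma resid_FF:
  "r\<^sup>2 * resid m x r w = FF (Psi m) (\<lambda>e. mdeg e - 1) (aa x) (r\<^sup>2) lap0 (r\<^sup>2 *\<^sub>R w)"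
  unfolding resid_def FF_def sum_distrib_left
proof (intro sum.cong refl)
  fix e assume e: "e \<in> Psi m"
  have "(\<Sum>k\<in>UNIV. Phi x r e k * w $ k) = r ^ mdeg e * (aa x e \<bullet> w)"
    by (simp add: Phi_def mono_scale aa_inner sum_distrib_left mult.assoc)
  moreover have "aa x e \<bullet> (r\<^sup>2 *\<^sub>R w) = r\<^sup>2 * (aa x e \<bullet> w)" by simp
  ultimately show "r\<^sup>2 * (lap0 e - (\<Sum>k\<in>UNIV. Phi x r e k * w $ k))\<^sup>2 =
    (r\<^sup>2) ^ (mdeg e - 1) * (lap0 e - aa x e \<bullet> (r\<^sup>2 *\<^sub>R w))\<^sup>2"
    using term_eq[of "mdeg e" "lap0 e" r "aa x e \<bullet> w"] mdeg_Psi[OF e] lap0_nz by simp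
qed


lemma repr0: "reproduces m x 0 z"
  unfolding reproduces_def using mdeg_Psi by fastforce

lemma ord_props: "reproduces m x (ord_approx m x z) z" "ord_approx m x z \<le> m"
proof -
  have "ord_approx m x z \<le> m \<and> reproduces m x (ord_approx m x z) z"
    unfolding ord_approx_def
    by (rule GreatestI_nat[of _ 0 m]) (auto simp: repr0)
  then show "reproduces m x (ord_approx m x z) z" "ord_approx m x z \<le> m" by auto
qed

lemma ord_ge: "l \<le> m \<Longrightarrow> reproduces m x l z \<Longrightarrow> l \<le> ord_approx m x z"
  unfolding ord_approx_def by (rule Greatest_le_nat[of _ l m]) auto

lemma FF_term: "finite E \<Longrightarrow> e \<in> E \<Longrightarrow> 0 \<le> \<epsilon> \<Longrightarrow> \<epsilon> ^ lev e * (y e - a e \<bullet> \<eta>)\<^sup>2 \<le> FF E lev a \<epsilon> y \<eta>"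
  unfolding FF_def by (rule member_le_sum) auto

theorem lemma3p2:
  fixes m :: nat and x :: "'p::finite \<Rightarrow> real \<times> real"
    and \<omega> :: "real \<Rightarrow> real ^ 'p"
  assumes m2: "m \<ge> 2"
    and rank: "full_col_rank m x"
    and ls: "\<And>r w. r > 0 \<Longrightarrow> resid m x r (\<omega> r) \<le> resid m x r w"
  shows "(\<exists>r0 > 0. \<exists>C > 0. \<forall>r. 0 < r \<and> r \<le> r0 \<longrightarrow> norm ((r\<^sup>2) *\<^sub>R \<omega> r) \<le> C)
    \<and> (\<forall>(s :: nat \<Rightarrow> real) \<eta>. (\<forall>n. s n > 0) \<longrightarrow> s \<longlonglongrightarrow> 0 \<longrightarrow>
         (\<lambda>n. (s n)\<^sup>2 *\<^sub>R \<omega> (s n)) \<longlonglongrightarrow> \<eta> \<longrightarrow>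
         ord_approx m x \<eta> = Max (range (ord_approx m x)))"
proof -
  define lev where "lev = (\<lambda>e. mdeg e - 1)"
  define F where "F = (\<lambda>\<epsilon> \<eta>. FF (Psi m) lev (aa x) \<epsilon> lap0 \<eta>)"
  have mn: "F (r\<^sup>2) (r\<^sup>2 *\<^sub>R \<omega> r) \<le> F (r\<^sup>2) \<eta>'" if r: "r > 0" for r \<eta>'
  proof -
    have "F (r\<^sup>2) (r\<^sup>2 *\<^sub>R \<omega> r) = r\<^sup>2 * resid m x r (\<omega> r)"
      unfolding F_def lev_def by (simp add: resid_FF)
    also have "\<dots> \<le> r\<^sup>2 * resid m x r (inverse (r\<^sup>2) *\<^sub>R \<eta>')"
      using ls[OF r] by (intro mult_left_mono) auto
    also have "\<dots> = F (r\<^sup>2) \<eta>'"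
      unfolding F_def lev_def resid_FF using r by simp
    finally show ?thesis .
  qed
  have P1: "\<exists>r0 > 0. \<exists>C > 0. \<forall>r. 0 < r \<and> r \<le> r0 \<longrightarrow> norm ((r\<^sup>2) *\<^sub>R \<omega> r) \<le> C"
  proof -
    have "\<exists>C. \<forall>\<epsilon> y \<eta>. 0 < \<epsilon> \<longrightarrow> \<epsilon> \<le> 1 \<longrightarrow> \<eta> \<in> UNIV \<longrightarrow>
       (\<forall>\<eta>'\<in>UNIV. FF (Psi m) lev (aa x) \<epsilon> y \<eta> \<le> FF (Psi m) lev (aa x) \<epsilon> y \<eta>')
       \<longrightarrow> (norm \<eta>)\<^sup>2 \<le> C * (\<Sum>e\<in>Psi m. (y e)\<^sup>2)"
    proof (rule key[OF finite_Psi subspace_UNIV])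
      show "\<forall>e\<in>Psi m. lev e < m" using mdeg_Psi by (fastforce simp: lev_def)
      show "\<forall>\<eta>\<in>UNIV. (\<forall>e\<in>Psi m. aa x e \<bullet> \<eta> = 0) \<longrightarrow> \<eta> = 0"
        using rank unfolding full_col_rank_def by (simp add: aa_inner Phi_def)
    qed
    then obtain C where C: "\<And>\<epsilon> y \<eta>. 0 < \<epsilon> \<Longrightarrow> \<epsilon> \<le> 1 \<Longrightarrow>
       (\<forall>\<eta>'. FF (Psi m) lev (aa x) \<epsilon> y \<eta> \<le> FF (Psi m) lev (aa x) \<epsilon> y \<eta>')
       \<Longrightarrow> (norm \<eta>)\<^sup>2 \<le> C * (\<Sum>e\<in>Psi m. (y e)\<^sup>2)" by blast
    define Q where "Q = (\<Sum>e\<in>Psi m. (lap0 e)\<^sup>2)"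
    have bnd: "\<forall>r. 0 < r \<and> r \<le> 1 \<longrightarrow> norm ((r\<^sup>2) *\<^sub>R \<omega> r) \<le> sqrt \<bar>C * Q\<bar> + 1"
    proof (intro allI impI)
      fix r :: real assume r: "0 < r \<and> r \<le> 1"
      have "r\<^sup>2 \<le> 1" using r by (simp add: power_le_one)
      then have "(norm (r\<^sup>2 *\<^sub>R \<omega> r))\<^sup>2 \<le> C * Q"
        unfolding Q_def using r mn[of r] by (intro C) (auto simp: F_def)
      then have "norm (r\<^sup>2 *\<^sub>R \<omega> r) \<le> sqrt \<bar>C * Q\<bar>" by (intro real_le_rsqrt) auto
      then show "norm (r\<^sup>2 *\<^sub>R \<omega> r) \<le> sqrt \<bar>C * Q\<bar> + 1" by simp
    qed
    have pos: "sqrt \<bar>C * Q\<bar> + 1 > 0" by (simp add: add_nonneg_pos)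
    show ?thesis using bnd pos zero_less_one by blast
  qed
  have P2: "ord_approx m x \<eta> = Max (range (ord_approx m x))"
    if s0: "\<forall>n. s n > 0" and sl: "s \<longlonglongrightarrow> 0" and el: "(\<lambda>n. (s n)\<^sup>2 *\<^sub>R \<omega> (s n)) \<longlonglongrightarrow> \<eta>"
    for s :: "nat \<Rightarrow> real" and \<eta>
  proof -
    define M where "M = Max (range (ord_approx m x))"
    have finr: "finite (range (ord_approx m x))"
      by (rule finite_subset[of _ "{0..m}"]) (auto simp: ord_props)
    have "M \<in> range (ord_approx m x)" unfolding M_def using finr by (intro Max_in) auto
    then obtain \<zeta> where zM: "ord_approx m x \<zeta> = M" by auto
    have rz: "reproduces m x M \<zeta>" using ord_props(1)[of m x \<zeta>] zM by simp
    have Mm: "M \<le> m" using ord_props(2)[of m x \<zeta>] zM by simp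
    define B where "B = (\<Sum>e\<in>Psi m. (lap0 e - aa x e \<bullet> \<zeta>)\<^sup>2)"
    have Fz: "F \<epsilon> \<zeta> \<le> \<epsilon> ^ M * B" if "0 \<le> \<epsilon>" "\<epsilon> \<le> 1" for \<epsilon> :: real
      unfolding F_def FF_def B_def sum_distrib_left
    proof (intro sum_mono)
      fix e assume e: "e \<in> Psi m"
      show "\<epsilon> ^ lev e * (lap0 e - aa x e \<bullet> \<zeta>)\<^sup>2 \<le> \<epsilon> ^ M * (lap0 e - aa x e \<bullet> \<zeta>)\<^sup>2"
      proof (cases "mdeg e \<le> M")
        case True
        then have "aa x e \<bullet> \<zeta> = lap0 e" using rz e
          unfolding reproduces_def by (auto simp: aa_inner mult.commute)
        then show ?thesis by simp
      next
        case False
        then have "\<epsilon> ^ lev e \<le> \<epsilon> ^ M" unfolding lev_def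
          using that by (intro power_decreasing) auto
        then show ?thesis by (intro mult_right_mono) auto
      qed
    qed
    have "reproduces m x M \<eta>"
      unfolding reproduces_def
    proof (intro ballI impI)
      fix e assume e: "e \<in> Psi m" and dM: "mdeg e \<le> M"
      define g where "g = (\<lambda>n. (lap0 e - aa x e \<bullet> ((s n)\<^sup>2 *\<^sub>R \<omega> (s n)))\<^sup>2)"
      have gl: "g \<longlonglongrightarrow> (lap0 e - aa x e \<bullet> \<eta>)\<^sup>2"
        unfolding g_def by (intro tendsto_intros el)
      have bl: "(\<lambda>n. (s n)\<^sup>2 * B) \<longlonglongrightarrow> 0\<^sup>2 * B"
        by (intro tendsto_intros sl)
      have ev: "\<forall>\<^sub>F n in sequentially. g n \<le> (s n)\<^sup>2 * B"
      proof -
        have "\<forall>\<^sub>F n in sequentially. s n < 1"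
          using sl by (intro order_tendstoD) auto
        then show ?thesis
        proof (rule eventually_mono)
          fix n assume sn1: "s n < 1"
          define \<epsilon> where "\<epsilon> = (s n)\<^sup>2"
          have e0: "0 < \<epsilon>" using s0 by (simp add: \<epsilon>_def less_imp_neq[symmetric])
          have e1: "\<epsilon> \<le> 1" using s0 sn1 by (simp add: \<epsilon>_def power_le_one less_imp_le)
          have d1: "1 \<le> mdeg e" using mdeg_Psi[OF e] by simp
          have "\<epsilon> ^ lev e * g n \<le> F \<epsilon> ((s n)\<^sup>2 *\<^sub>R \<omega> (s n))"
            unfolding g_def F_def by (rule FF_term[OF finite_Psi e]) (use e0 in auto)
          also have "\<dots> \<le> F \<epsilon> \<zeta>" unfolding \<epsilon>_def using mn s0 by blast
          also have "\<dots> \<le> \<epsilon> ^ M * B" using Fz e0 e1 by simp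
          also have "\<epsilon> ^ M = \<epsilon> ^ lev e * \<epsilon> ^ (M - lev e)"
            using dM by (simp add: power_add[symmetric] lev_def)
          finally have "\<epsilon> ^ lev e * g n \<le> \<epsilon> ^ lev e * (\<epsilon> ^ (M - lev e) * B)" by (simp add: mult.assoc)
          then have gn: "g n \<le> \<epsilon> ^ (M - lev e) * B" using e0 by simp
          have B0: "0 \<le> B" unfolding B_def by (intro sum_nonneg) auto
          have "\<epsilon> ^ (M - lev e) \<le> \<epsilon> ^ 1" using e0 e1 dM d1 unfolding lev_def
            by (intro power_decreasing) auto
          then have "\<epsilon> ^ (M - lev e) * B \<le> \<epsilon> * B" using B0 by (simp add: mult_right_mono)
          with gn show "g n \<le> (s n)\<^sup>2 * B" by (simp add: \<epsilon>_def)
        qed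
      qed
      have "(lap0 e - aa x e \<bullet> \<eta>)\<^sup>2 \<le> 0\<^sup>2 * B"
        by (rule tendsto_le[OF trivial_limit_sequentially bl gl ev])
      then have "aa x e \<bullet> \<eta> = lap0 e" by simp
      then show "(\<Sum>k\<in>UNIV. \<eta> $ k * mono e (x k)) = lap0 e" by (simp add: aa_inner mult.commute)
    qed
    then have "M \<le> ord_approx m x \<eta>" by (rule ord_ge[OF Mm])
    moreover have "ord_approx m x \<eta> \<le> M" unfolding M_def using finr by (intro Max_ge) auto
    ultimately show ?thesis unfolding M_def by simp
  qed
  show ?thesis using P1 P2 by blast
qed

end
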